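(* Let $\Gamma=\mathrm{SL}_2(\mathbb Z)$, $\nu_{\mathbb H}\begin{pmatrix}a&b\\c&d\end{pmatrix}=a^2+b^2+c^2+d^2$, and for integers $m_1,m_2$ and $n\ge3$ let $$S_e(m_1,m_2,n)=\sum_{\substack{\gamma\in\Gamma\\ \nu_{\mathbb H}(\gamma)=n}}\exp\big(i(2\theta_1(\gamma)m_1+2\theta_2(\gamma)m_2)\big).$$ If $m_1$ or $m_2$ is odd, then $S_e(m_1,m_2,n)=0$. If both are even, then $$S_e(m_1,m_2,n)=\begin{cases}16\,W_{m_1+m_2}(n+2)\,W_{m_1-m_2}(n-2),& n\equiv2\bmod4,\\ 8\,W^P_{m_1+m_2}(n+2)\,W^P_{m_1-m_2}(n-2),& n\equiv3\bmod4,\\ 0,&\text{otherwise.}\end{cases}$$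
   Context: For $\theta\in\mathbb R$, $r\ge0$ let $k(\theta)=\begin{pmatrix}\cos\theta&\sin\theta\\-\sin\theta&\cos\theta\end{pmatrix}$, $a(e^{-r})=\mathrm{diag}(e^{-r/2},e^{r/2})$; each $\gamma$ is written $\gamma=k(\theta_1(\gamma))a(e^{-r})k(\theta_2(\gamma))$ with $r=d_{\mathbb H}(\gamma i,i)>0$ when $\nu_{\mathbb H}(\gamma)>2$, the angles being determined mod $\pi$. $N(z)=z\bar z$; $w\in\mathbb Z[i]$ is primary if $w\equiv1\bmod(1+i)^3$. $W_m(n)=\frac14\sum_{z\in\mathbb Z[i],N(z)=n}(z/|z|)^m$. For odd $n$, $W^P_m(n)=\sum_{z\in\mathbb Z[i],\,N(z)=n,\,z\text{ primary}}(z/|z|)^m$; $W^P_m(2^l)=e^{i\pi lm/4}$; and $W^P_m(2^ln')=W^P_m(2^l)W^P_m(n')$ for $n'$ odd. *)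

theory Defs
  imports "HOL-Analysis.Analysis"
begin

(* Elements of SL_2(Z) as integer 2x2 matrices gamma = [[a,b],[c,d]],
   a = gamma$1$1, b = gamma$1$2, c = gamma$2$1, d = gamma$2$2. *)
definition SL2Z :: "(int^2^2) set" where
  "SL2Z = {g. det g = 1}"

definition nuH :: "int^2^2 \<Rightarrow> int" where
  "nuH g = (g$1$1)^2 + (g$1$2)^2 + (g$2$1)^2 + (g$2$2)^2"

definition to_real_mat :: "int^2^2 \<Rightarrow> real^2^2" where
  "to_real_mat g = (\<chi> i j. real_of_int (g$i$j))"

definition kmat :: "real \<Rightarrow> real^2^2" where
  "kmat t = vector [vector [cos t, sin t], vector [- sin t, cos t]]"

(* a(e^{-r}) = diag(e^{-r/2}, e^{r/2}) *)
definition amat_r :: "real \<Rightarrow> real^2^2" where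
  "amat_r r = vector [vector [exp (- r / 2), 0], vector [0, exp (r / 2)]]"

definition moeb :: "int^2^2 \<Rightarrow> complex \<Rightarrow> complex" where
  "moeb g z = (of_int (g$1$1) * z + of_int (g$1$2)) / (of_int (g$2$1) * z + of_int (g$2$2))"

definition hdist :: "complex \<Rightarrow> complex \<Rightarrow> real" where
  "hdist z w = arcosh (1 + (cmod (z - w))^2 / (2 * Im z * Im w))"

definition kak :: "int^2^2 \<Rightarrow> real \<Rightarrow> real \<Rightarrow> bool" where
  "kak g t1 t2 \<longleftrightarrow>
     to_real_mat g = kmat t1 ** amat_r (hdist (moeb g \<i>) \<i>) ** kmat t2"

(* the angles (theta_1(gamma), theta_2(gamma)), a choice of them (determined mod pi) *)
definition thetas :: "int^2^2 \<Rightarrow> real \<times> real" where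
  "thetas g = (SOME p. kak g (fst p) (snd p))"

definition Se :: "int \<Rightarrow> int \<Rightarrow> nat \<Rightarrow> complex" where
  "Se m1 m2 n = (\<Sum>g\<in>{g\<in>SL2Z. nuH g = int n}.
      exp (\<i> * complex_of_real (2 * fst (thetas g) * of_int m1 + 2 * snd (thetas g) * of_int m2)))"

definition gauss :: "int \<Rightarrow> int \<Rightarrow> complex" where
  "gauss x y = Complex (of_int x) (of_int y)"

definition W :: "int \<Rightarrow> nat \<Rightarrow> complex" where
  "W m n = (1/4) * (\<Sum>(x,y)\<in>{(x::int,y::int). x^2 + y^2 = int n}.
      (gauss x y / complex_of_real (cmod (gauss x y))) powi m)"

definition primary :: "int \<Rightarrow> int \<Rightarrow> bool" where
  "primary x y \<longleftrightarrow> (\<exists>u v. gauss x y - 1 = (1 + \<i>)^3 * gauss u v)"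

definition WP_odd :: "int \<Rightarrow> nat \<Rightarrow> complex" where
  "WP_odd m n = (\<Sum>(x,y)\<in>{(x::int,y::int). x^2 + y^2 = int n \<and> primary x y}.
      (gauss x y / complex_of_real (cmod (gauss x y))) powi m)"

definition WP :: "int \<Rightarrow> nat \<Rightarrow> complex" where
  "WP m n = (let l = multiplicity (2::nat) n; n' = n div 2 ^ l in
      exp (\<i> * complex_of_real (pi * real l * of_int m / 4)) * WP_odd m n')"

end

theory Submission
  imports Defs
begin

lemma hd_aux:
  fixes N A D :: real
  assumes "D > 0" "N^2 = A * D - 1"
  shows "1 + ((N/D)^2 + (1/D - 1)^2) / (2 * (1/D) * 1) = (A + D) / 2"
proof -
  have "((N/D)^2 + (1/D - 1)^2) = (N^2 + (1 - D)^2) / D^2" using assms(1)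
    by (simp add: field_simps power2_eq_square)
  also have "... = (A*D - 2*D + D^2) / D^2" using assms(2) by (simp add: power2_eq_square algebra_simps)
  finally have e: "((N/D)^2 + (1/D - 1)^2) = (A*D - 2*D + D^2) / D^2" .
  show ?thesis unfolding e using assms(1) by (simp add: field_simps power2_eq_square)
qed

lemma hdist_calc:
  fixes a b c d :: int
  assumes det: "a*d - b*c = 1"
  shows "hdist ((of_int a * \<i> + of_int b) / (of_int c * \<i> + of_int d)) \<i>
          = arcosh (real_of_int (a^2 + b^2 + c^2 + d^2) / 2)"
proof -
  define D where "D = real_of_int c^2 + (real_of_int d)^2"
  have detr: "real_of_int a * d - real_of_int b * c = 1" using det by (metis of_int_1 of_int_diff of_int_mult)
  have Dpos: "D > 0" unfolding D_def using detr
    by (cases "c = 0") (auto simp: sum_power2_gt_zero_iff)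
  define z :: complex where "z = (of_int a * \<i> + of_int b) / (of_int c * \<i> + of_int d)"
  have re: "Re z = (real_of_int b*d + real_of_int a*c) / D" unfolding D_def z_def by (simp add: Re_divide power2_eq_square)
  have im: "Im z = 1 / D" unfolding D_def z_def using detr by (simp add: Im_divide power2_eq_square algebra_simps)
  have id: "(real_of_int b*d + real_of_int a*c)^2 = (real_of_int a^2 + real_of_int b^2) * D - 1"
  proof -
    have "(real_of_int b*d + real_of_int a*c)^2 + (real_of_int a*d - real_of_int b*c)^2 = (real_of_int a^2 + real_of_int b^2) * D"
      unfolding D_def by (simp add: power2_eq_square algebra_simps)
    then show ?thesis using detr by simp
  qed
  have cm: "(cmod (z - \<i>))^2 = (Re z)^2 + (Im z - 1)^2" by (simp add: cmod_power2)
  have key: "1 + (cmod (z - \<i>))^2 / (2 * Im z * Im \<i>) = real_of_int (a^2 + b^2 + c^2 + d^2) / 2"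
    unfolding cm re im using hd_aux[OF Dpos id] by (simp add: D_def)
  show ?thesis unfolding hdist_def key z_def[symmetric] ..
qed

lemma prod_entries:
  "(kmat t1 ** amat_r r ** kmat t2) $ 1 $ 1 = cos t1 * exp(-r/2) * cos t2 - sin t1 * exp(r/2) * sin t2"
  "(kmat t1 ** amat_r r ** kmat t2) $ 1 $ 2 = cos t1 * exp(-r/2) * sin t2 + sin t1 * exp(r/2) * cos t2"
  "(kmat t1 ** amat_r r ** kmat t2) $ 2 $ 1 = - sin t1 * exp(-r/2) * cos t2 - cos t1 * exp(r/2) * sin t2"
  "(kmat t1 ** amat_r r ** kmat t2) $ 2 $ 2 = - sin t1 * exp(-r/2) * sin t2 + cos t1 * exp(r/2) * cos t2"
  by (simp_all add: matrix_matrix_mult_def kmat_def amat_r_def sum_2 algebra_simps)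

lemma kak_iff:
  "kak g t1 t2 \<longleftrightarrow>
    (let r = hdist (moeb g \<i>) \<i> in
     real_of_int (g$1$1) = cos t1 * exp(-r/2) * cos t2 - sin t1 * exp(r/2) * sin t2 \<and>
     real_of_int (g$1$2) = cos t1 * exp(-r/2) * sin t2 + sin t1 * exp(r/2) * cos t2 \<and>
     real_of_int (g$2$1) = - sin t1 * exp(-r/2) * cos t2 - cos t1 * exp(r/2) * sin t2 \<and>
     real_of_int (g$2$2) = - sin t1 * exp(-r/2) * sin t2 + cos t1 * exp(r/2) * cos t2)"
  unfolding kak_def Let_def vec_eq_iff forall_2 prod_entries to_real_mat_def by simp

lemma ab_facts:
  fixes x :: real
  assumes "x \<ge> 3"
  defines "r \<equiv> arcosh (x/2)"
  shows "exp(-r/2) + exp(r/2) = sqrt(x+2)" "exp(-r/2) - exp(r/2) = - sqrt(x-2)"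
proof -
  have ch: "cosh r = x/2" unfolding r_def using assms(1) by (intro cosh_arcosh_real) simp
  have r0: "r \<ge> 0" unfolding r_def using assms(1) by (intro arcosh_nonneg_real) simp
  have p: "exp(-r/2) * exp(r/2) = 1" by (simp flip: exp_add)
  have s1: "exp(-r/2)^2 = exp(-r)" by (simp add: power2_eq_square flip: exp_add)
  have s2: "exp(r/2)^2 = exp(r)" by (simp add: power2_eq_square flip: exp_add)
  have sum: "exp(-r) + exp r = x" using ch by (simp add: cosh_def)
  have "(exp(-r/2) + exp(r/2))^2 = x + 2"
    using p s1 s2 sum by (simp add: power2_sum)
  then show "exp(-r/2) + exp(r/2) = sqrt(x+2)"
    by (metis add_pos_pos exp_gt_zero less_eq_real_def real_sqrt_unique)
  have le: "exp(-r/2) \<le> exp(r/2)" using r0 by simp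
  have "(exp(r/2) - exp(-r/2))^2 = exp(r/2)^2 + exp(-r/2)^2 - 2*(exp(-r/2)*exp(r/2))"
    by (simp add: power2_diff algebra_simps)
  also have "... = x - 2" using p s1 s2 sum by simp
  finally have "(exp(r/2) - exp(-r/2))^2 = x - 2" .
  then have "exp(r/2) - exp(-r/2) = sqrt(x-2)" using le
    by (metis diff_ge_0_iff_ge real_sqrt_unique)
  then show "exp(-r/2) - exp(r/2) = - sqrt(x-2)" by simp
qed

definition uu :: "int \<Rightarrow> int \<Rightarrow> complex" where
  "uu x y = gauss x y / complex_of_real (cmod (gauss x y))"

lemma unit_pos:
  assumes "z = complex_of_real k * cis t" "k > 0"
  shows "z / complex_of_real (cmod z) = cis t"
  using assms by (simp add: norm_mult)

lemma unit_neg: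
  assumes "z = complex_of_real k * cis t" "k < 0"
  shows "z / complex_of_real (cmod z) = - cis t"
  using assms by (simp add: norm_mult)

lemma angle_core:
  fixes a b c d :: int and al be t1 t2 :: real and m1 m2 :: int
  assumes pos: "al + be > 0" and neg: "al - be < 0"
  and e1: "real_of_int a = cos t1 * al * cos t2 - sin t1 * be * sin t2"
  and e2: "real_of_int b = cos t1 * al * sin t2 + sin t1 * be * cos t2"
  and e3: "real_of_int c = - sin t1 * al * cos t2 - cos t1 * be * sin t2"
  and e4: "real_of_int d = - sin t1 * al * sin t2 + cos t1 * be * cos t2"
  shows "exp (\<i> * complex_of_real (2 * t1 * of_int m1 + 2 * t2 * of_int m2))
     = uu (a+d) (b-c) powi (m1+m2) * (- uu (a-d) (-(b+c))) powi (m1-m2)"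
proof -
  have P: "gauss (a+d) (b-c) = complex_of_real (al+be) * cis (t1+t2)"
    unfolding gauss_def using e1 e2 e3 e4
    by (simp add: complex_eq_iff cos_add sin_add algebra_simps)
  have Q: "gauss (a-d) (-(b+c)) = complex_of_real (al-be) * cis (t1-t2)"
    unfolding gauss_def using e1 e2 e3 e4
    by (simp add: complex_eq_iff cos_diff sin_diff algebra_simps)
  have u1: "uu (a+d) (b-c) = exp (\<i> * complex_of_real (t1+t2))"
    unfolding uu_def using unit_pos[OF P pos] by (simp add: cis_conv_exp)
  have u2: "- uu (a-d) (-(b+c)) = exp (\<i> * complex_of_real (t1-t2))"
    unfolding uu_def using unit_neg[OF Q neg] by (simp add: cis_conv_exp)
  show ?thesis unfolding u1 u2 exp_power_int
    by (simp flip: exp_add add: algebra_simps)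
qed

lemma exists_core:
  fixes a b c d :: int and al be :: real
  assumes det: "a*d - b*c = 1" and x3: "real_of_int (a^2+b^2+c^2+d^2) \<ge> 3"
  and hp: "al + be = sqrt (real_of_int (a^2+b^2+c^2+d^2) + 2)"
  and hm: "al - be = - sqrt (real_of_int (a^2+b^2+c^2+d^2) - 2)"
  shows "\<exists>t1 t2. real_of_int a = cos t1 * al * cos t2 - sin t1 * be * sin t2 \<and>
     real_of_int b = cos t1 * al * sin t2 + sin t1 * be * cos t2 \<and>
     real_of_int c = - sin t1 * al * cos t2 - cos t1 * be * sin t2 \<and>
     real_of_int d = - sin t1 * al * sin t2 + cos t1 * be * cos t2"
proof -
  define x where "x = real_of_int (a^2+b^2+c^2+d^2)"
  define S where "S = sqrt (x+2)"
  define T where "T = sqrt (x-2)"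
  have Sp: "S > 0" unfolding S_def using x3 x_def by simp
  have Tp: "T > 0" unfolding T_def using x3 x_def by simp
  have detr: "real_of_int a * d - real_of_int b * c = 1" using det by (metis of_int_1 of_int_diff of_int_mult)
  have SS: "S^2 = x + 2" unfolding S_def using x3 x_def by simp
  have TT: "T^2 = x - 2" unfolding T_def using x3 x_def by simp
  have n1: "(real_of_int (a+d))^2 + (real_of_int (b-c))^2 = S^2"
    unfolding SS x_def using detr by (simp add: power2_eq_square algebra_simps)
  have n2: "(-real_of_int (a-d))^2 + (real_of_int (b+c))^2 = T^2"
    unfolding TT x_def using detr by (simp add: power2_eq_square algebra_simps)
  have "(real_of_int (a+d) / S)^2 + (real_of_int (b-c) / S)^2 = 1"
    using n1 Sp by (simp add: power_divide add_divide_distrib[symmetric])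
  then obtain s where s: "real_of_int (a+d) / S = cos s" "real_of_int (b-c) / S = sin s"
    using sincos_total_2pi by metis
  have "(-real_of_int (a-d) / T)^2 + (real_of_int (b+c) / T)^2 = 1"
    using n2 Tp by (simp add: power_divide add_divide_distrib[symmetric])
  then obtain t where t: "-real_of_int (a-d) / T = cos t" "real_of_int (b+c) / T = sin t"
    using sincos_total_2pi by metis
  define t1 where "t1 = (s+t)/2"
  define t2 where "t2 = (s-t)/2"
  have st1: "s = t1 + t2" unfolding t1_def t2_def by (simp add: field_simps)
  have st2: "t = t1 - t2" unfolding t1_def t2_def by (simp add: field_simps)
  note st = st1 st2
  have hp': "al + be = S" using hp unfolding S_def x_def by simp
  have hm': "al - be = - T" using hm unfolding T_def x_def by simp
  have g1: "real_of_int (a+d) = S * cos s" using s(1) Sp by (simp add: field_simps)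
  have g2: "real_of_int (b-c) = S * sin s" using s(2) Sp by (simp add: field_simps)
  have g3: "real_of_int (a-d) = - T * cos t" using t(1) Tp by (simp add: field_simps)
  have g4: "real_of_int (b+c) = T * sin t" using t(2) Tp by (simp add: field_simps)
  have f1: "real_of_int a + real_of_int d = (al+be) * (cos t1 * cos t2 - sin t1 * sin t2)"
    using g1 unfolding hp' st cos_add by simp
  have f2: "real_of_int b - real_of_int c = (al+be) * (sin t1 * cos t2 + cos t1 * sin t2)"
    using g2 unfolding hp' st sin_add by simp
  have f3: "real_of_int a - real_of_int d = (al-be) * (cos t1 * cos t2 + sin t1 * sin t2)"
    using g3 unfolding hm' st cos_diff by simp
  have f4: "real_of_int b + real_of_int c = - (al-be) * (sin t1 * cos t2 - cos t1 * sin t2)"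
    using g4 unfolding hm' st sin_diff by simp
  show ?thesis
  proof (intro exI conjI)
    show "real_of_int a = cos t1 * al * cos t2 - sin t1 * be * sin t2"
      using f1 f3 by (simp add: algebra_simps; linarith)
    show "real_of_int d = - sin t1 * al * sin t2 + cos t1 * be * cos t2"
      using f1 f3 by (simp add: algebra_simps; linarith)
    show "real_of_int b = cos t1 * al * sin t2 + sin t1 * be * cos t2"
      using f2 f4 by (simp add: algebra_simps; linarith)
    show "real_of_int c = - sin t1 * al * cos t2 - cos t1 * be * sin t2"
      using f2 f4 by (simp add: algebra_simps; linarith)
  qed
qed

definition Tg :: "int \<Rightarrow> int \<Rightarrow> int^2^2 \<Rightarrow> complex" where
  "Tg p q g = uu (g$1$1 + g$2$2) (g$1$2 - g$2$1) powi p * (- uu (g$1$1 - g$2$2) (-(g$1$2 + g$2$1))) powi q"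

lemma term_eq:
  assumes g: "g \<in> SL2Z" "nuH g = int n" and n3: "n \<ge> 3"
  shows "exp (\<i> * complex_of_real (2 * fst (thetas g) * of_int m1 + 2 * snd (thetas g) * of_int m2))
     = Tg (m1+m2) (m1-m2) g"
proof -
  define a where "a = g$1$1"
  define b where "b = g$1$2"
  define c where "c = g$2$1"
  define d where "d = g$2$2"
  have det: "a*d - b*c = 1" using g(1) unfolding SL2Z_def a_def b_def c_def d_def by (simp add: det_2)
  define x where "x = real_of_int (a^2+b^2+c^2+d^2)"
  have x3: "x \<ge> 3" using g(2) n3 unfolding x_def nuH_def a_def b_def c_def d_def by simp
  define r where "r = hdist (moeb g \<i>) \<i>"
  have r: "r = arcosh (x/2)" unfolding r_def moeb_def x_def
    using hdist_calc[OF det] unfolding a_def b_def c_def d_def by simp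
  have ab1: "exp(-r/2) + exp(r/2) = sqrt(x+2)" "exp(-r/2) - exp(r/2) = - sqrt(x-2)"
    using ab_facts[OF x3] unfolding r by simp_all
  have kk: "kak g t1 t2 \<longleftrightarrow>
     real_of_int a = cos t1 * exp(-r/2) * cos t2 - sin t1 * exp(r/2) * sin t2 \<and>
     real_of_int b = cos t1 * exp(-r/2) * sin t2 + sin t1 * exp(r/2) * cos t2 \<and>
     real_of_int c = - sin t1 * exp(-r/2) * cos t2 - cos t1 * exp(r/2) * sin t2 \<and>
     real_of_int d = - sin t1 * exp(-r/2) * sin t2 + cos t1 * exp(r/2) * cos t2" for t1 t2
    unfolding kak_iff Let_def r_def a_def b_def c_def d_def ..
  have "\<exists>t1 t2. kak g t1 t2"
    unfolding kk using exists_core[OF det x3[unfolded x_def] ab1[unfolded x_def]] .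
  then have "\<exists>p. kak g (fst p) (snd p)" by auto
  then have kt: "kak g (fst (thetas g)) (snd (thetas g))"
    unfolding thetas_def by (rule someI_ex)
  have pos: "exp(-r/2) + exp(r/2) > 0" by (simp add: add_pos_pos)
  have neg: "exp(-r/2) - exp(r/2) < 0" using ab1(2) x3 by simp
  show ?thesis
    using angle_core[OF pos neg, of a "fst (thetas g)" "snd (thetas g)" b c d m1 m2] kt[unfolded kk]
    unfolding Tg_def a_def b_def c_def d_def by simp
qed

lemma Se_Tg:
  assumes "n \<ge> 3"
  shows "Se m1 m2 n = (\<Sum>g\<in>{g\<in>SL2Z. nuH g = int n}. Tg (m1+m2) (m1-m2) g)"
  unfolding Se_def using term_eq[OF _ _ assms] by (intro sum.cong) auto

definition Bset :: "nat \<Rightarrow> ((int\<times>int)\<times>(int\<times>int)) set" where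
  "Bset n = {((x1,y1),(x2,y2)). x1^2+y1^2 = int n + 2 \<and> x2^2+y2^2 = int n - 2 \<and> even (x1-x2) \<and> even (y1-y2)}"

definition Hf :: "int \<Rightarrow> int \<Rightarrow> ((int\<times>int)\<times>(int\<times>int)) \<Rightarrow> complex" where
  "Hf p q = (\<lambda>((x1,y1),(x2,y2)). uu x1 y1 powi p * (- uu x2 y2) powi q)"

definition mk :: "int \<Rightarrow> int \<Rightarrow> int \<Rightarrow> int \<Rightarrow> int^2^2" where
  "mk a b c d = vector [vector [a,b], vector [c,d]]"

lemma mk_entries [simp]: "mk a b c d $ 1 $ 1 = a" "mk a b c d $ 1 $ 2 = b" "mk a b c d $ 2 $ 1 = c" "mk a b c d $ 2 $ 2 = d"
  by (simp_all add: mk_def)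

definition phi :: "int^2^2 \<Rightarrow> (int\<times>int)\<times>(int\<times>int)" where
  "phi g = ((g$1$1 + g$2$2, g$1$2 - g$2$1), (g$1$1 - g$2$2, -(g$1$2 + g$2$1)))"

definition psi :: "(int\<times>int)\<times>(int\<times>int) \<Rightarrow> int^2^2" where
  "psi e = (case e of ((x1,y1),(x2,y2)) \<Rightarrow>
     mk ((x1+x2) div 2) ((y1-y2) div 2) ((y1 - y2) div 2 - y1) (x1 - (x1+x2) div 2))"

lemma mat_eq2: "(g::'a^2^2) = h \<longleftrightarrow> g$1$1 = h$1$1 \<and> g$1$2 = h$1$2 \<and> g$2$1 = h$2$1 \<and> g$2$2 = h$2$2"
  by (auto simp: vec_eq_iff forall_2)

lemma sum_A_B:
  assumes "n \<ge> 3"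
  shows "(\<Sum>g\<in>{g\<in>SL2Z. nuH g = int n}. Tg p q g) = sum (Hf p q) (Bset n)"
proof (rule sum.reindex_bij_witness[where j = phi and i = psi])
  fix g assume g: "g \<in> {g\<in>SL2Z. nuH g = int n}"
  show "psi (phi g) = g" unfolding psi_def phi_def mat_eq2 by simp
  have det: "g$1$1 * g$2$2 - g$1$2 * g$2$1 = 1" using g by (simp add: SL2Z_def det_2)
  have nu: "(g$1$1)^2 + (g$1$2)^2 + (g$2$1)^2 + (g$2$2)^2 = int n" using g by (simp add: nuH_def)
  show "phi g \<in> Bset n" unfolding phi_def Bset_def using det nu
    by (simp add: power2_eq_square algebra_simps)
  show "Hf p q (phi g) = Tg p q g" unfolding phi_def Hf_def Tg_def by simp
next
  fix e assume e: "e \<in> Bset n"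
  obtain x1 y1 x2 y2 where ee: "e = ((x1,y1),(x2,y2))" by (metis prod.exhaust)
  have h: "x1^2+y1^2 = int n + 2" "x2^2+y2^2 = int n - 2" "even (x1-x2)" "even (y1-y2)"
    using e unfolding ee Bset_def by auto
  obtain k where k: "x1 + x2 = 2*k" using h(3) by (metis dvd_def even_add even_diff)
  obtain l where l: "y1 - y2 = 2*l" using h(4) by (metis dvd_def)
  have x2: "x2 = 2*k - x1" and y2: "y2 = y1 - 2*l" using k l by auto
  have kd: "(x1+x2) div 2 = k" and ld: "(y1-y2) div 2 = l" using k l by auto
  have key: "k*(x1-k) - l*(l-y1) = 1"
  proof -
    have "(2*k - x1)^2 + (y1 - 2*l)^2 = x1^2 + y1^2 - 4" using h(1,2) unfolding x2 y2 by simp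
    then show ?thesis by (simp add: power2_eq_square algebra_simps)
  qed
  show "phi (psi e) = e" unfolding ee psi_def phi_def using kd ld x2 y2 by simp
  have pe: "psi e = mk k l (l - y1) (x1 - k)" unfolding ee psi_def using kd ld by simp
  show "psi e \<in> {g\<in>SL2Z. nuH g = int n}"
    unfolding pe SL2Z_def nuH_def using key h(1)
    by (simp add: det_2 power2_eq_square algebra_simps)
qed

lemma m1_even: "even (k::int) \<Longrightarrow> (-1::complex) powi k = 1"
proof -
  assume "even k" then obtain j where "k = 2*j" by blast
  then show ?thesis by (simp add: power_int_mult)
qed
lemma m1_odd: "odd (k::int) \<Longrightarrow> (-1::complex) powi k = -1"
proof -
  assume "odd k" then obtain j where "k = 2*j + 1" by (metis oddE)
  then show ?thesis by (simp add: power_int_mult power_int_add)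
qed
lemma neg_pow_even: "even (k::int) \<Longrightarrow> (- z::complex) powi k = z powi k"
proof -
  assume e: "even k"
  have "(- z) powi k = ((-1) * z) powi k" by simp
  also have "... = (-1) powi k * z powi k" by (rule power_int_mult_distrib)
  finally show ?thesis using m1_even[OF e] by simp
qed
lemma i_pow_2: "\<i> powi (2 * m) = (-1::complex) powi m"
  by (simp add: power_int_mult)
lemma abs_le_sq: "\<bar>x::int\<bar> \<le> x^2"
proof (cases "x = 0")
  case False
  then have "\<bar>x\<bar> * 1 \<le> \<bar>x\<bar> * \<bar>x\<bar>" by (intro mult_left_mono) auto
  then show ?thesis by (simp add: power2_eq_square abs_mult_self_eq)
qed simp

lemma sq4: "\<exists>k. (x::int)^2 = 4*k + (if even x then 0 else 1)"
proof (cases "even x")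
  case True then obtain k where "x = 2*k" by blast
  then show ?thesis using True by (intro exI[of _ "k*k"]) (simp add: power2_eq_square)
next
  case False then obtain k where "x = 2*k+1" by (metis oddE)
  then show ?thesis using False by (intro exI[of _ "k*k+k"]) (simp add: power2_eq_square algebra_simps)
qed

lemma nu4:
  fixes a b c d :: int
  assumes "odd (a*d - b*c)"
  shows "(a^2+b^2+c^2+d^2) mod 4 = 2 \<or> (a^2+b^2+c^2+d^2) mod 4 = 3"
proof -
  obtain ka kb kc kd where k: "a^2 = 4*ka + (if even a then 0 else 1)" "b^2 = 4*kb + (if even b then 0 else 1)"
    "c^2 = 4*kc + (if even c then 0 else 1)" "d^2 = 4*kd + (if even d then 0 else 1)"
    using sq4 by metis
  show ?thesis unfolding k using assms by (auto split: if_splits) presburger+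
qed

lemma both_even:
  assumes "((x::int)^2 + y^2) mod 4 = 0"
  shows "even x \<and> even y"
proof -
  obtain kx ky where k: "x^2 = 4*kx + (if even x then 0 else 1)" "y^2 = 4*ky + (if even y then 0 else 1)"
    using sq4 by metis
  show ?thesis using assms unfolding k by (auto split: if_splits) presburger+
qed

lemma nu_mod4:
  assumes "g \<in> SL2Z"
  shows "nuH g mod 4 = 2 \<or> nuH g mod 4 = 3"
proof -
  have det: "g$1$1 * g$2$2 - g$1$2 * g$2$1 = 1" using assms unfolding SL2Z_def by (simp add: det_2)
  have "odd (g$1$1 * g$2$2 - g$1$2 * g$2$1)" unfolding det by simp
  from nu4[OF this] show ?thesis unfolding nuH_def .
qed

lemma odd_norm:
  assumes "odd ((x::int)^2 + y^2)"
  shows "(odd x \<and> even y) \<or> (even x \<and> odd y)"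
  using assms by auto

lemma gauss_rot: "gauss (-y) x = \<i> * gauss x y"
  by (simp add: gauss_def complex_eq_iff)

lemma gauss_rot': "gauss y (-x) = - \<i> * gauss x y"
  by (simp add: gauss_def complex_eq_iff)

lemma gauss_neg: "gauss (-x) (-y) = - gauss x y"
  by (simp add: gauss_def complex_eq_iff)

lemma uu_rot: "uu (-y) x = \<i> * uu x y"
  unfolding uu_def gauss_rot by (simp add: norm_mult)

lemma uu_rot': "uu y (-x) = - \<i> * uu x y"
  unfolding uu_def gauss_rot' by (simp add: norm_mult norm_minus_commute)

lemma uu_neg: "uu (-x) (-y) = - uu x y"
  unfolding uu_def gauss_neg by simp

definition rho1 :: "(int\<times>int)\<times>(int\<times>int) \<Rightarrow> (int\<times>int)\<times>(int\<times>int)" where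
  "rho1 e = (case e of ((x1,y1),(x2,y2)) \<Rightarrow> ((-y1,x1),(-y2,x2)))"
definition rho1i :: "(int\<times>int)\<times>(int\<times>int) \<Rightarrow> (int\<times>int)\<times>(int\<times>int)" where
  "rho1i e = (case e of ((x1,y1),(x2,y2)) \<Rightarrow> ((y1,-x1),(y2,-x2)))"
definition rho2 :: "(int\<times>int)\<times>(int\<times>int) \<Rightarrow> (int\<times>int)\<times>(int\<times>int)" where
  "rho2 e = (case e of ((x1,y1),(x2,y2)) \<Rightarrow> ((-y1,x1),(y2,-x2)))"
definition rho2i :: "(int\<times>int)\<times>(int\<times>int) \<Rightarrow> (int\<times>int)\<times>(int\<times>int)" where
  "rho2i e = (case e of ((x1,y1),(x2,y2)) \<Rightarrow> ((y1,-x1),(-y2,x2)))"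

lemma i_ne0: "(\<i>::complex) \<noteq> 0" by simp

lemma pull_i: "((c::complex) * a) powi p * (c * b) powi q = c powi p * c powi q * (a powi p * b powi q)"
  by (simp add: power_int_mult_distrib)

lemma Bsum_rot1: "sum (Hf p q) (Bset n) = \<i> powi (p+q) * sum (Hf p q) (Bset n)"
proof -
  have "sum (\<lambda>e. Hf p q (rho1 e)) (Bset n) = sum (Hf p q) (Bset n)"
  proof (rule sum.reindex_bij_witness[where j = rho1 and i = rho1i])
    fix e assume e: "e \<in> Bset n"
    obtain x1 y1 x2 y2 where ee: "e = ((x1,y1),(x2,y2))" by (metis prod.exhaust)
    show "rho1i (rho1 e) = e" unfolding ee rho1_def rho1i_def by simp
    show "rho1 e \<in> Bset n" using e unfolding ee rho1_def Bset_def
      by (auto simp: add.commute)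
    show "Hf p q (rho1 e) = Hf p q (rho1 e)" ..
  next
    fix e assume e: "e \<in> Bset n"
    obtain x1 y1 x2 y2 where ee: "e = ((x1,y1),(x2,y2))" by (metis prod.exhaust)
    show "rho1 (rho1i e) = e" unfolding ee rho1_def rho1i_def by simp
    show "rho1i e \<in> Bset n" using e unfolding ee rho1i_def Bset_def
      by (auto simp: add.commute)
  qed
  moreover have "Hf p q (rho1 e) = \<i> powi (p+q) * Hf p q e" for e
  proof -
    obtain x1 y1 x2 y2 where ee: "e = ((x1,y1),(x2,y2))" by (metis prod.exhaust)
    have "Hf p q (rho1 e) = (\<i> * uu x1 y1) powi p * (\<i> * (- uu x2 y2)) powi q"
      unfolding ee rho1_def Hf_def by (simp add: uu_rot)
    also have "... = \<i> powi (p+q) * Hf p q e"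
      unfolding ee Hf_def pull_i by (simp add: power_int_add)
    finally show ?thesis .
  qed
  ultimately show ?thesis by (simp add: sum_distrib_left)
qed
lemma mi: "(- \<i>) powi q = \<i> powi (-q)"
proof -
  have e: "- \<i> = inverse \<i>" by simp
  have "(-\<i>) powi q = (inverse \<i>) powi q" by (subst e) (rule refl)
  also have "... = inverse (\<i> powi q)" by (rule power_int_inverse)
  also have "... = \<i> powi (-q)" by (simp add: power_int_minus)
  finally show ?thesis .
qed

lemma pull_cd: "((c::complex) * a) powi p * (d * b) powi q = c powi p * d powi q * (a powi p * b powi q)"
  by (simp add: power_int_mult_distrib)

lemma Bsum_rot2: "sum (Hf p q) (Bset n) = \<i> powi (p-q) * sum (Hf p q) (Bset n)"
proof -
  have "sum (\<lambda>e. Hf p q (rho2 e)) (Bset n) = sum (Hf p q) (Bset n)"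
  proof (rule sum.reindex_bij_witness[where j = rho2 and i = rho2i])
    fix e assume e: "e \<in> Bset n"
    obtain x1 y1 x2 y2 where ee: "e = ((x1,y1),(x2,y2))" by (metis prod.exhaust)
    show "rho2i (rho2 e) = e" unfolding ee rho2_def rho2i_def by simp
    have "even (x1 + x2)" "even (y1 + y2)" using e unfolding ee Bset_def
      by (auto simp: add.commute)
    then show "rho2 e \<in> Bset n" using e unfolding ee rho2_def Bset_def
      by (auto simp: add.commute)
    show "Hf p q (rho2 e) = Hf p q (rho2 e)" ..
  next
    fix e assume e: "e \<in> Bset n"
    obtain x1 y1 x2 y2 where ee: "e = ((x1,y1),(x2,y2))" by (metis prod.exhaust)
    show "rho2 (rho2i e) = e" unfolding ee rho2_def rho2i_def by simp
    have "even (x1 + x2)" "even (y1 + y2)" using e unfolding ee Bset_def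
      by (auto simp: add.commute)
    then show "rho2i e \<in> Bset n" using e unfolding ee rho2i_def Bset_def
      by (auto simp: add.commute)
  qed
  moreover have "Hf p q (rho2 e) = \<i> powi (p-q) * Hf p q e" for e
  proof -
    obtain x1 y1 x2 y2 where ee: "e = ((x1,y1),(x2,y2))" by (metis prod.exhaust)
    have "Hf p q (rho2 e) = (\<i> * uu x1 y1) powi p * ((- \<i>) * (- uu x2 y2)) powi q"
      unfolding ee rho2_def Hf_def by (simp add: uu_rot uu_rot')
    also have "... = \<i> powi (p-q) * Hf p q e"
      using power_int_add[of \<i> p "-q"] unfolding ee Hf_def pull_cd mi by simp
    finally show ?thesis .
  qed
  ultimately show ?thesis by (simp add: sum_distrib_left)
qed

lemma odd_case:
  assumes "n \<ge> 3" "odd m1 \<or> odd m2"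
  shows "Se m1 m2 n = 0"
proof -
  have S: "Se m1 m2 n = sum (Hf (m1+m2) (m1-m2)) (Bset n)"
    using Se_Tg[OF assms(1)] sum_A_B[OF assms(1)] by simp
  show ?thesis
  proof (cases "odd m1")
    case True
    have "\<i> powi ((m1+m2) + (m1-m2)) = -1"
      using i_pow_2[of m1] m1_odd[OF True] by (simp add: algebra_simps)
    then show ?thesis using Bsum_rot1[of "m1+m2" "m1-m2" n] S by simp
  next
    case False
    then have o: "odd m2" using assms(2) by simp
    have "\<i> powi ((m1+m2) - (m1-m2)) = -1"
      using i_pow_2[of m2] m1_odd[OF o] by (simp add: algebra_simps)
    then show ?thesis using Bsum_rot2[of "m1+m2" "m1-m2" n] S by simp
  qed
qed

definition Cset :: "int \<Rightarrow> (int\<times>int) set" where "Cset N = {(x,y). x^2+y^2 = N}"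

lemma finite_Cset: "finite (Cset N)"
proof (rule finite_subset)
  show "Cset N \<subseteq> {-\<bar>N\<bar>..\<bar>N\<bar>} \<times> {-\<bar>N\<bar>..\<bar>N\<bar>}"
  proof
    fix e assume "e \<in> Cset N"
    then obtain x y where e: "e = (x,y)" "x^2+y^2 = N" unfolding Cset_def by auto
    have "\<bar>x\<bar> \<le> N" using abs_le_sq[of x] e(2) by (smt (verit) zero_le_power2)
    moreover have "\<bar>y\<bar> \<le> N" using abs_le_sq[of y] e(2) by (smt (verit) zero_le_power2)
    ultimately show "e \<in> {-\<bar>N\<bar>..\<bar>N\<bar>} \<times> {-\<bar>N\<bar>..\<bar>N\<bar>}" using e(1) by auto
  qed
qed auto

definition ff :: "int \<Rightarrow> int\<times>int \<Rightarrow> complex" where "ff p = (\<lambda>(x,y). uu x y powi p)"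

definition Gf :: "int \<Rightarrow> int \<Rightarrow> ((int\<times>int)\<times>(int\<times>int)) \<Rightarrow> complex" where
  "Gf p q = (\<lambda>(a,b). ff p a * ff q b)"

lemma Hf_Gf: "even q \<Longrightarrow> Hf p q = Gf p q"
  by (auto simp: Hf_def Gf_def ff_def neg_pow_even fun_eq_iff)

lemma Gf_prod: "sum (Gf p q) (A \<times> B) = sum (ff p) A * sum (ff q) B"
  by (simp add: Gf_def sum_product sum.cartesian_product)

lemma W_Cset: "W m N = 1/4 * sum (ff m) (Cset (int N))"
  unfolding W_def ff_def uu_def Cset_def ..

lemma case2:
  assumes n3: "n \<ge> 3" and m: "n mod 4 = 2" and ev: "even m1" "even m2"
  shows "Se m1 m2 n = 16 * W (m1 + m2) (n + 2) * W (m1 - m2) (n - 2)"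
proof -
  have S: "Se m1 m2 n = sum (Hf (m1+m2) (m1-m2)) (Bset n)"
    using Se_Tg[OF n3] sum_A_B[OF n3] by simp
  have eq: "even (m1 - m2)" using ev by simp
  have im: "int n mod 4 = 2" using m by presburger
  have B: "Bset n = Cset (int n + 2) \<times> Cset (int n - 2)"
  proof (intro set_eqI iffI)
    fix e assume "e \<in> Bset n" then show "e \<in> Cset (int n + 2) \<times> Cset (int n - 2)"
      unfolding Bset_def Cset_def by auto
  next
    fix e assume e: "e \<in> Cset (int n + 2) \<times> Cset (int n - 2)"
    obtain x1 y1 x2 y2 where ee: "e = ((x1,y1),(x2,y2))" by (metis prod.exhaust)
    have h: "x1^2 + y1^2 = int n + 2" "x2^2 + y2^2 = int n - 2" using e unfolding ee Cset_def by auto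
    have "(x1^2 + y1^2) mod 4 = 0" using h(1) im by presburger
    then have e1: "even x1 \<and> even y1" by (rule both_even)
    have "(x2^2 + y2^2) mod 4 = 0" using h(2) im by presburger
    then have e2: "even x2 \<and> even y2" by (rule both_even)
    show "e \<in> Bset n" unfolding ee Bset_def using h e1 e2 by auto
  qed
  have n2: "int (n - 2) = int n - 2" using n3 by simp
  have n2': "int (n + 2) = int n + 2" by simp
  show ?thesis unfolding S Hf_Gf[OF eq] B Gf_prod W_Cset n2 n2' by simp
qed

lemma gauss_inj: "gauss a b = gauss c d \<longleftrightarrow> a = c \<and> b = d"
  by (simp add: gauss_def complex_eq_iff)

lemma primary_iff: "primary x y \<longleftrightarrow> even y \<and> 4 dvd (y - x + 1)"
proof -
  have c: "(1 + \<i>)^3 = Complex (-2) 2" by (simp add: power3_eq_cube complex_eq_iff)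
  have g1: "gauss x y - 1 = gauss (x-1) y" by (simp add: gauss_def complex_eq_iff)
  have g2: "(1+\<i>)^3 * gauss u w = gauss (-2*u-2*w) (2*u - 2*w)" for u w
    by (simp add: c gauss_def complex_eq_iff)
  have "primary x y \<longleftrightarrow> (\<exists>u w. x - 1 = -2*u - 2*w \<and> y = 2*u - 2*w)"
    unfolding primary_def g1 g2 gauss_inj ..
  also have "... \<longleftrightarrow> even y \<and> 4 dvd (y - x + 1)" by presburger
  finally show ?thesis .
qed

definition S1 :: "int \<Rightarrow> (int\<times>int) set" where "S1 N = {(x,y). x^2+y^2 = N \<and> odd x \<and> even y}"
definition Si :: "int \<Rightarrow> (int\<times>int) set" where "Si N = {(x,y). x^2+y^2 = N \<and> even x \<and> odd y}"
definition Pset :: "int \<Rightarrow> (int\<times>int) set" where "Pset N = {(x,y). x^2+y^2 = N \<and> primary x y}"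
definition Pset' :: "int \<Rightarrow> (int\<times>int) set" where "Pset' N = {(x,y). x^2+y^2 = N \<and> primary (-x) (-y)}"

lemma fin_sets: "finite (S1 N)" "finite (Si N)" "finite (Pset N)" "finite (Pset' N)"
  by (rule finite_subset[OF _ finite_Cset[of N]]; auto simp: S1_def Si_def Pset_def Pset'_def Cset_def)+

lemma sum_Si: "sum (ff p) (Si N) = \<i> powi p * sum (ff p) (S1 N)"
proof -
  have "sum (\<lambda>a. ff p (case a of (x,y) \<Rightarrow> (-y,x))) (S1 N) = sum (ff p) (Si N)"
    by (rule sum.reindex_bij_witness[where j = "\<lambda>(x,y). (-y,x)" and i = "\<lambda>(x,y). (y,-x)"])
       (auto simp: S1_def Si_def)
  moreover have "ff p (case a of (x,y) \<Rightarrow> (-y,x)) = \<i> powi p * ff p a" for a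
    by (cases a) (simp add: ff_def uu_rot power_int_mult_distrib)
  ultimately show ?thesis by (simp add: sum_distrib_left)
qed

lemma sum_S1:
  assumes "even p"
  shows "sum (ff p) (S1 N) = 2 * sum (ff p) (Pset N)"
proof -
  have U: "S1 N = Pset N \<union> Pset' N"
  proof (intro set_eqI iffI)
    fix e assume "e \<in> S1 N"
    then obtain x y where e: "e = (x,y)" "x^2+y^2 = N" "odd x" "even y" unfolding S1_def by auto
    have "primary x y \<or> primary (-x) (-y)" unfolding primary_iff using e(3,4) by presburger
    then show "e \<in> Pset N \<union> Pset' N" using e unfolding Pset_def Pset'_def by auto
  next
    fix e assume "e \<in> Pset N \<union> Pset' N"
    then obtain x y where e: "e = (x,y)" "x^2+y^2 = N" "primary x y \<or> primary (-x) (-y)"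
      unfolding Pset_def Pset'_def by auto
    have "odd x \<and> even y" using e(3) unfolding primary_iff by presburger
    then show "e \<in> S1 N" using e unfolding S1_def by auto
  qed
  have D: "Pset N \<inter> Pset' N = {}"
  proof -
    have "\<not> (primary x y \<and> primary (-x) (-y))" for x y unfolding primary_iff by presburger
    then show ?thesis unfolding Pset_def Pset'_def by auto
  qed
  have "sum (\<lambda>a. ff p (case a of (x,y) \<Rightarrow> (-x,-y))) (Pset N) = sum (ff p) (Pset' N)"
    by (rule sum.reindex_bij_witness[where j = "\<lambda>(x,y). (-x,-y)" and i = "\<lambda>(x,y). (-x,-y)"])
       (auto simp: Pset_def Pset'_def)
  moreover have "ff p (case a of (x,y) \<Rightarrow> (-x,-y)) = ff p a" for a
    by (cases a) (simp add: ff_def uu_neg neg_pow_even[OF assms])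
  ultimately have "sum (ff p) (Pset' N) = sum (ff p) (Pset N)" by simp
  then show ?thesis unfolding U using sum.union_disjoint[OF fin_sets(3,4) D, of "ff p"] by simp
qed

lemma WP_odd_eq: "odd N \<Longrightarrow> WP m N = sum (ff m) (Pset (int N))"
  unfolding WP_def WP_odd_def ff_def uu_def Pset_def
  by (simp add: not_dvd_imp_multiplicity_0)

lemma case3:
  assumes n3: "n \<ge> 3" and m: "n mod 4 = 3" and ev: "even m1" "even m2"
  shows "Se m1 m2 n = 8 * WP (m1 + m2) (n + 2) * WP (m1 - m2) (n - 2)"
proof -
  define p where "p = m1 + m2"
  define q where "q = m1 - m2"
  have S: "Se m1 m2 n = sum (Hf p q) (Bset n)"
    using Se_Tg[OF n3] sum_A_B[OF n3] unfolding p_def q_def by simp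
  have eq: "even q" "even p" using ev unfolding p_def q_def by simp_all
  have on: "odd (int n)" using m by presburger
  let ?A = "S1 (int n + 2) \<times> S1 (int n - 2)"
  let ?B = "Si (int n + 2) \<times> Si (int n - 2)"
  have B: "Bset n = ?A \<union> ?B"
  proof (intro set_eqI iffI)
    fix e assume e: "e \<in> Bset n"
    obtain x1 y1 x2 y2 where ee: "e = ((x1,y1),(x2,y2))" by (metis prod.exhaust)
    have h: "x1^2 + y1^2 = int n + 2" "x2^2 + y2^2 = int n - 2" "even (x1 - x2)" "even (y1 - y2)"
      using e unfolding ee Bset_def by auto
    have o1: "(odd x1 \<and> even y1) \<or> (even x1 \<and> odd y1)" using h(1) on by (intro odd_norm) simp
    have o2: "(odd x2 \<and> even y2) \<or> (even x2 \<and> odd y2)" using h(2) on by (intro odd_norm) simp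
    show "e \<in> ?A \<union> ?B" using o1 o2 h unfolding ee S1_def Si_def by auto
  next
    fix e assume e: "e \<in> ?A \<union> ?B"
    then show "e \<in> Bset n" unfolding Bset_def S1_def Si_def by auto
  qed
  have D: "?A \<inter> ?B = {}" unfolding S1_def Si_def by auto
  have fA: "finite ?A" "finite ?B" using fin_sets by auto
  have ip: "\<i> powi p * \<i> powi q = 1"
  proof -
    have "\<i> powi p * \<i> powi q = \<i> powi (p + q)" by (simp add: power_int_add)
    also have "p + q = 2 * m1" unfolding p_def q_def by simp
    finally show ?thesis using i_pow_2[of m1] m1_even[OF ev(1)] by simp
  qed
  have "sum (Hf p q) (Bset n) = sum (Gf p q) ?A + sum (Gf p q) ?B"
    unfolding Hf_Gf[OF eq(1)] B using sum.union_disjoint[OF fA D] by simp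
  also have "... = (1 + \<i> powi p * \<i> powi q) * (sum (ff p) (S1 (int n + 2)) * sum (ff q) (S1 (int n - 2)))"
    unfolding Gf_prod sum_Si by (simp add: algebra_simps)
  also have "... = 8 * sum (ff p) (Pset (int n + 2)) * sum (ff q) (Pset (int n - 2))"
    unfolding ip sum_S1[OF eq(2)] sum_S1[OF eq(1)] by simp
  also have "... = 8 * WP p (n + 2) * WP q (n - 2)"
  proof -
    have o1: "odd (n+2)" "odd (n-2)" using m n3 by presburger+
    have n2: "int (n - 2) = int n - 2" using n3 by simp
    have n2': "int (n + 2) = int n + 2" by simp
    show ?thesis unfolding WP_odd_eq[OF o1(1)] WP_odd_eq[OF o1(2)] n2 n2' by simp
  qed
  finally show ?thesis unfolding S p_def q_def .
qed

theorem lemma3p6: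
  fixes m1 m2 :: int and n :: nat
  assumes "n \<ge> 3"
  shows "(odd m1 \<or> odd m2 \<longrightarrow> Se m1 m2 n = 0) \<and>
         (even m1 \<and> even m2 \<longrightarrow>
            Se m1 m2 n =
              (if n mod 4 = 2 then 16 * W (m1 + m2) (n + 2) * W (m1 - m2) (n - 2)
               else if n mod 4 = 3 then 8 * WP (m1 + m2) (n + 2) * WP (m1 - m2) (n - 2)
               else 0))"
proof (intro conjI impI)
  assume "odd m1 \<or> odd m2"
  then show "Se m1 m2 n = 0" using odd_case[OF assms] by simp
next
  assume ev: "even m1 \<and> even m2"
  show "Se m1 m2 n = (if n mod 4 = 2 then 16 * W (m1 + m2) (n + 2) * W (m1 - m2) (n - 2)
               else if n mod 4 = 3 then 8 * WP (m1 + m2) (n + 2) * WP (m1 - m2) (n - 2)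
               else 0)"
  proof (cases "n mod 4 = 2")
    case True then show ?thesis using case2[OF assms True] ev by simp
  next
    case F2: False
    show ?thesis
    proof (cases "n mod 4 = 3")
      case True then show ?thesis using case3[OF assms True] ev F2 by simp
    next
      case F3: False
      have E: "{g\<in>SL2Z. nuH g = int n} = {}"
      proof (rule ccontr)
        assume "{g\<in>SL2Z. nuH g = int n} \<noteq> {}"
        then obtain g where g: "g \<in> SL2Z" "nuH g = int n" by auto
        from nu_mod4[OF g(1)] g(2) F2 F3 show False by presburger
      qed
      show ?thesis using F2 F3 unfolding Se_def E by simp
    qed
  qed
qed

end
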